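(* Let $\mu$ be a positive integer, $M=2^\mu-1$, and let $S_1,\dots,S_M$ be pairwise disjoint subsets of $\mathbb R^2$ each of which contains balls of arbitrarily large radii. Then there exist measurable sets $\{E_w\}_{w\in W_\mu}$, frequencies $\{\xi_w\}_{w\in W_\mu}\subset\mathbb R^2$ and radii $\{\rho_w\}_{w\in W_\mu}\subset(0,\infty)$ such that: (a) $E_w\subset[0,1]^2$ for every $w\in W_\mu$; $E_\emptyset=[0,1]^2$; for every $w\in W_{\mu-1}$, $E_w$ is the disjoint union of $E_{w0}$ and $E_{w1}$; for each $\ell=0,\dots,\mu-1$, $[0,1]^2$ is the disjoint union of the $E_w$ with $w$ of length $\ell$; and $\sum_{w\in W_\mu}\mathbb 1_{E_w}(x)=\mu$ for every $x\in[0,1]^2$. (b) For every $w\in W_\mu$: $\|\mathbb 1_{E_w}*\phi_{\rho_w}-\mathbb 1_{E_w}\|_{L^2}\le2^{-\mu-10}$; $\int_{E_w}|\cos(\langle\xi_w,x\rangle)|\,dx\ge|E_w|/3$; and $B(\xi_w,\rho_w)\subset S_{\tau(w)}$. (c) For every $w\in W_{\mu-1}$: $\cos(\langle\xi_w,x\rangle)\ge0$ for $x\in E_{w0}$ and $\cos(\langle\xi_w,x\rangle)<0$ for $x\in E_{w1}$.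
   Context: $W_\mu=\{\emptyset\}\cup\bigcup_{\ell=1}^{\mu-1}\{0,1\}^\ell$ (binary words of length at most $\mu-1$); $w0,w1$ denote concatenation. $\tau:W_\mu\to\{1,\dots,2^\mu-1\}$: $\tau(\emptyset)=2^{\mu-1}$, $\tau(w_1\cdots w_\ell)=w_12^{\mu-1}+\dots+w_\ell2^{\mu-\ell}+2^{\mu-\ell-1}$. Fix a nonnegative Schwartz function $\phi$ on $\mathbb R^2$ with $\int\phi=1$ and $\widehat\phi$ supported in the unit ball $B(0,1)$, and put $\phi_\rho(x)=\rho^2\phi(\rho x)$ for $\rho>0$. $B(\xi,\rho)$ is the open ball of center $\xi$ and radius $\rho$. *)

theory Defs
  imports "HOL-Analysis.Analysis"
begin

text \<open>Binary words are bool lists (False = 0, True = 1); w0 = w @ [False], w1 = w @ [True].\<close>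

definition W :: "nat \<Rightarrow> bool list set" where
  "W mu = {w. length w \<le> mu - 1}"

definition tau :: "nat \<Rightarrow> bool list \<Rightarrow> nat" where
  "tau mu w = (\<Sum>i<length w. (if w ! i then 1 else 0) * 2 ^ (mu - 1 - i)) + 2 ^ (mu - length w - 1)"

inductive_set partial_derivs :: "(real^2 \<Rightarrow> real) \<Rightarrow> (real^2 \<Rightarrow> real) set"
  for f :: "real^2 \<Rightarrow> real" where
  base: "f \<in> partial_derivs f"
| step: "g \<in> partial_derivs f \<Longrightarrow> (\<forall>x. g differentiable (at x)) \<Longrightarrow> e \<in> Basis \<Longrightarrow>
         (\<lambda>x. frechet_derivative g (at x) e) \<in> partial_derivs f"

definition schwartz :: "(real^2 \<Rightarrow> real) \<Rightarrow> bool" where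
  "schwartz f \<longleftrightarrow> (\<forall>g\<in>partial_derivs f. (\<forall>x. g differentiable (at x)) \<and>
      (\<forall>k::nat. bounded (range (\<lambda>x. norm x ^ k * g x))))"

definition fourier :: "(real^2 \<Rightarrow> real) \<Rightarrow> real^2 \<Rightarrow> complex" where
  "fourier f xi = (\<integral>x. complex_of_real (f x) * cis (- 2 * pi * (x \<bullet> xi)) \<partial>lborel)"

definition dilate :: "real \<Rightarrow> (real^2 \<Rightarrow> real) \<Rightarrow> real^2 \<Rightarrow> real" where
  "dilate rho f x = rho ^ 2 * f (rho *\<^sub>R x)"

definition conv :: "(real^2 \<Rightarrow> real) \<Rightarrow> (real^2 \<Rightarrow> real) \<Rightarrow> real^2 \<Rightarrow> real" where
  "conv f g x = (\<integral>y. f y * g (x - y) \<partial>lebesgue)"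

end

theory Submission
  imports Defs
begin



lemma nn_affine:
  fixes f :: "real^2 \<Rightarrow> ennreal"
  assumes f[measurable]: "f \<in> borel_measurable borel" and c: "c \<noteq> 0"
  shows "(\<integral>\<^sup>+ x. f x \<partial>lborel) = ennreal (c^2) * (\<integral>\<^sup>+ y. f (t + c *\<^sub>R y) \<partial>lborel)"
proof -
  have "(\<integral>\<^sup>+ x. f x \<partial>lborel) = (\<integral>\<^sup>+ x. f x \<partial>density (distr lborel borel (\<lambda>x. t + c *\<^sub>R x)) (\<lambda>_. \<bar>c\<bar>^DIM(real^2)))"
    using arg_cong[OF lborel_affine[OF c, of t], of "\<lambda>M. nn_integral M f"] by simp
  also have "\<dots> = (\<integral>\<^sup>+ x. ennreal (\<bar>c\<bar>^2) * f x \<partial>distr lborel borel (\<lambda>x. t + c *\<^sub>R x))"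
    by (subst nn_integral_density) auto
  also have "\<dots> = (\<integral>\<^sup>+ y. ennreal (\<bar>c\<bar>^2) * f (t + c *\<^sub>R y) \<partial>lborel)"
    by (subst nn_integral_distr) auto
  also have "\<dots> = ennreal (c^2) * (\<integral>\<^sup>+ y. f (t + c *\<^sub>R y) \<partial>lborel)"
    by (subst nn_integral_cmult) auto
  finally show ?thesis .
qed




definition good :: "(real^2) set \<Rightarrow> bool" where
  "good E \<longleftrightarrow> E \<in> sets borel \<and> E \<subseteq> cbox 0 One \<and> frontier E \<in> null_sets lborel"

definition Gt :: "(real^2) set \<Rightarrow> real^2 \<Rightarrow> ennreal" where
  "Gt E z = (\<integral>\<^sup>+ x. ennreal \<bar>indicator E (x - z) - indicator E x\<bar> \<partial>lborel)"

lemma cube_norm: "y \<in> cbox (0::real^2) One \<Longrightarrow> norm y \<le> 2"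
proof -
  assume y: "y \<in> cbox (0::real^2) One"
  have "\<And>i. \<bar>y $ i\<bar> \<le> 1"
  proof -
    fix i
    have "0 \<le> y $ i \<and> y $ i \<le> (One::real^2) $ i" using y by (simp only: mem_box_cart) (metis zero_index)
    then show "\<bar>y $ i\<bar> \<le> 1" by (metis Cart_1 one_index abs_of_nonneg)
  qed
  then have "(\<Sum>i\<in>UNIV. \<bar>y $ i\<bar>) \<le> (\<Sum>i\<in>(UNIV::2 set). 1)" by (intro sum_mono) auto
  then show ?thesis using norm_le_l1_cart[of y] by simp
qed

lemma Gt_tendsto:
  assumes "good E"
  shows "(Gt E \<longlongrightarrow> 0) (at 0)"
proof -
  have E[measurable]: "E \<in> sets borel" and Esub: "E \<subseteq> cbox 0 One" and fr: "frontier E \<in> null_sets lborel"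
    using assms by (auto simp: good_def)
  have "(Gt E \<longlongrightarrow> 0) (at 0 within ball 0 1)"
  proof (unfold tendsto_at_iff_sequentially, intro allI impI)
    fix X :: "nat \<Rightarrow> real^2"
    assume Xb: "\<forall>i. X i \<in> ball 0 1 - {0}" and X0: "X \<longlonglongrightarrow> 0"
    define u where "u i x = (\<bar>indicator E (x - X i) - indicator E x\<bar> :: real)" for i and x :: "real^2"
    have [measurable]: "u i \<in> borel_measurable lborel" for i
      unfolding u_def by measurable
    have bnd: "AE x in lborel. norm (u i x) \<le> indicator (cball 0 3) x" for i
    proof (rule AE_I2)
      fix x :: "real^2"
      show "norm (u i x) \<le> indicator (cball 0 3) x"
      proof (cases "x \<in> cball 0 3")
        case True then show ?thesis by (auto simp: u_def indicator_def)
      next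
        case False
        have nx: "norm x > 3" using False by auto
        have "x \<notin> E" using Esub cube_norm nx by fastforce
        moreover have "x - X i \<notin> E"
        proof
          assume "x - X i \<in> E"
          then have "norm (x - X i) \<le> 2" using Esub cube_norm by blast
          moreover have "norm (X i) < 1" using Xb by auto
          ultimately have "norm x < 3" using norm_triangle_ineq[of "x - X i" "X i"] by simp
          with nx show False by simp
        qed
        ultimately show ?thesis using False by (simp add: u_def)
      qed
    qed
    have lim: "AE x in lborel. (\<lambda>i. u i x) \<longlonglongrightarrow> 0"
    proof -
      have "AE x in lborel. x \<notin> frontier E" using fr by (rule AE_not_in)
      then show ?thesis
      proof (rule AE_mp, intro AE_I2 impI)
        fix x assume xf: "x \<notin> frontier E"
        have Xx: "(\<lambda>i. x - X i) \<longlonglongrightarrow> x" using tendsto_diff[OF tendsto_const X0] by simp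
        show "(\<lambda>i. u i x) \<longlonglongrightarrow> 0"
        proof (cases "x \<in> interior E")
          case True
          have "eventually (\<lambda>i. x - X i \<in> interior E) sequentially"
            using topological_tendstoD[OF Xx open_interior True] .
          then have "eventually (\<lambda>i. u i x = 0) sequentially"
            by eventually_elim (use True interior_subset in \<open>auto simp: u_def indicator_def\<close>)
          then show ?thesis by (rule tendsto_eventually)
        next
          case False
          then have xc: "x \<in> - closure E" using xf by (auto simp: frontier_def)
          have "eventually (\<lambda>i. x - X i \<in> - closure E) sequentially"
            using topological_tendstoD[OF Xx _ xc] by auto
          then have "eventually (\<lambda>i. u i x = 0) sequentially"
            by eventually_elim (use xc closure_subset[of E] in \<open>auto simp: u_def indicator_def\<close>)
          then show ?thesis by (rule tendsto_eventually)
        qed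
      qed
    qed
    have "(\<lambda>i. (\<integral>\<^sup>+x. norm (0 - u i x) \<partial>lborel)) \<longlonglongrightarrow> 0"
      by (rule nn_integral_dominated_convergence_norm[OF _ _ _ bnd _ lim])
         (auto simp: emeasure_lborel_cball_finite[unfolded infinity_ennreal_def] ennreal_indicator nn_integral_indicator intro!: borel_measurable_indicator)
    then show "(Gt E \<circ> X) \<longlonglongrightarrow> 0"
      by (simp add: Gt_def u_def o_def)
  qed
  then show ?thesis by (subst (asm) tendsto_within_open) auto
qed




lemma emeasure_cube_le:
  assumes "E \<subseteq> cbox 0 (One::real^2)"
  shows "emeasure lborel E \<le> 1"
proof -
  have "emeasure lborel E \<le> emeasure lborel (cbox 0 (One::real^2))"
    using assms by (intro emeasure_mono) auto
  also have "\<dots> = 1" by (simp add: emeasure_lborel_cbox_eq)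
  finally show ?thesis .
qed

lemma nn_translate:
  fixes f :: "real^2 \<Rightarrow> ennreal"
  assumes f[measurable]: "f \<in> borel_measurable borel"
  shows "(\<integral>\<^sup>+ x. f (x - z) \<partial>lborel) = (\<integral>\<^sup>+ x. f x \<partial>lborel)"
  using nn_affine[of "\<lambda>x. f (x - z)" 1 z] by simp

lemma Gt_le:
  assumes E[measurable]: "E \<in> sets borel" and Esub: "E \<subseteq> cbox 0 One"
  shows "Gt E z \<le> 2"
proof -
  have "Gt E z \<le> (\<integral>\<^sup>+ x. indicator E (x - z) + indicator E x \<partial>lborel)"
    unfolding Gt_def by (intro nn_integral_mono) (auto simp: indicator_def)
  also have "\<dots> = (\<integral>\<^sup>+ x. indicator E (x - z) \<partial>lborel) + (\<integral>\<^sup>+ x. indicator E x \<partial>lborel)"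
    by (rule nn_integral_add) auto
  also have "(\<integral>\<^sup>+ x. indicator E (x - z) \<partial>lborel) = (\<integral>\<^sup>+ x. indicator E x \<partial>lborel)"
    by (rule nn_translate[of "indicator E"]) auto
  also have "(\<integral>\<^sup>+ x. indicator E x \<partial>lborel) = emeasure lborel E" by simp
  also have "emeasure lborel E + emeasure lborel E \<le> 1 + 1"
    using emeasure_cube_le[OF Esub] by (intro add_mono) auto
  finally show ?thesis by (simp add: one_add_one)
qed

lemma Gt_0: "Gt E 0 = 0"
  by (simp add: Gt_def)

lemma Gt_meas[measurable]:
  assumes E[measurable]: "E \<in> sets borel"
  shows "Gt E \<in> borel_measurable borel"
proof -
  have "(\<lambda>z. \<integral>\<^sup>+ x. ennreal \<bar>indicator E (x - z) - indicator E x\<bar> \<partial>lborel) \<in> borel_measurable borel"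
    by measurable
  then show ?thesis by (simp add: Gt_def[abs_def])
qed

lemma subst_phi:
  fixes phi h :: "real^2 \<Rightarrow> real"
  assumes [measurable]: "phi \<in> borel_measurable borel" "h \<in> borel_measurable borel"
    and hnn: "\<And>y. h y \<ge> 0" and phinn: "\<And>y. phi y \<ge> 0" and rho: "rho > 0"
  shows "(\<integral>\<^sup>+ y. ennreal (h y * dilate rho phi (x - y)) \<partial>lborel)
       = (\<integral>\<^sup>+ u. ennreal (h (x - inverse rho *\<^sub>R u) * phi u) \<partial>lborel)"
proof -
  have "(\<integral>\<^sup>+ y. ennreal (h y * dilate rho phi (x - y)) \<partial>lborel)
     = ennreal ((- inverse rho)^2) * (\<integral>\<^sup>+ u. ennreal (h (x + (- inverse rho) *\<^sub>R u) * dilate rho phi (x - (x + (- inverse rho) *\<^sub>R u))) \<partial>lborel)"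
    by (rule nn_affine) (use rho in \<open>auto simp: dilate_def\<close>)
  also have "\<dots> = (\<integral>\<^sup>+ u. ennreal ((- inverse rho)^2) * ennreal (h (x + (- inverse rho) *\<^sub>R u) * dilate rho phi (x - (x + (- inverse rho) *\<^sub>R u))) \<partial>lborel)"
    by (subst nn_integral_cmult) (auto simp: dilate_def)
  also have "\<dots> = (\<integral>\<^sup>+ u. ennreal (h (x - inverse rho *\<^sub>R u) * phi u) \<partial>lborel)"
  proof (intro nn_integral_cong)
    fix u :: "real^2"
    have nn: "0 \<le> h (x + (- inverse rho) *\<^sub>R u) * dilate rho phi (x - (x + (- inverse rho) *\<^sub>R u))"
      using hnn phinn rho by (simp add: dilate_def)
    have "ennreal ((- inverse rho)^2) * ennreal (h (x + (- inverse rho) *\<^sub>R u) * dilate rho phi (x - (x + (- inverse rho) *\<^sub>R u)))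
      = ennreal ((- inverse rho)^2 * (h (x + (- inverse rho) *\<^sub>R u) * dilate rho phi (x - (x + (- inverse rho) *\<^sub>R u))))"
      by (rule ennreal_mult[symmetric]) (use nn in auto)
    also have "(- inverse rho)^2 * (h (x + (- inverse rho) *\<^sub>R u) * dilate rho phi (x - (x + (- inverse rho) *\<^sub>R u)))
        = h (x - inverse rho *\<^sub>R u) * phi u"
      using rho by (simp add: dilate_def power2_eq_square field_simps)
    finally show "ennreal ((- inverse rho)^2) * ennreal (h (x + (- inverse rho) *\<^sub>R u) * dilate rho phi (x - (x + (- inverse rho) *\<^sub>R u)))
        = ennreal (h (x - inverse rho *\<^sub>R u) * phi u)" .
  qed
  finally show ?thesis .
qed




lemma sq_le: "\<bar>a\<bar> \<le> b \<Longrightarrow> b \<le> 1 \<Longrightarrow> a^2 \<le> (b::real)"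
proof -
  assume a: "\<bar>a\<bar> \<le> b" "b \<le> 1"
  have "\<bar>a\<bar> * \<bar>a\<bar> \<le> \<bar>a\<bar> * 1" by (rule mult_left_mono) (use a in auto)
  then show ?thesis using a by (simp add: power2_eq_square abs_mult_self_eq)
qed

lemma L2_bound:
  fixes phi :: "real^2 \<Rightarrow> real"
  assumes phim[measurable]: "phi \<in> borel_measurable borel" and phinn: "\<And>y. phi y \<ge> 0"
    and phii: "integrable lborel phi" and phi1: "(\<integral>x. phi x \<partial>lborel) = 1"
    and E[measurable]: "E \<in> sets borel" and rho: "rho > 0"
  shows "(\<integral>\<^sup>+ x. ennreal ((conv (indicator E) (dilate rho phi) x - indicator E x)\<^sup>2) \<partial>lebesgue)
     \<le> (\<integral>\<^sup>+ u. ennreal (phi u) * Gt E (inverse rho *\<^sub>R u) \<partial>lborel)"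
proof -
  have dm[measurable]: "dilate rho phi \<in> borel_measurable borel"
    unfolding dilate_def[abs_def] by measurable
  have phiN: "(\<integral>\<^sup>+ u. ennreal (phi u) \<partial>lborel) = 1"
    using nn_integral_eq_integral[OF phii] phinn phi1 by simp
  define K where "K x = (\<integral>y. \<bar>indicator E y - indicator E x\<bar> * dilate rho phi (x - y) \<partial>lborel)" for x
  have pt: "(conv (indicator E) (dilate rho phi) x - indicator E x)\<^sup>2 \<le> K x
         \<and> ennreal (K x) = (\<integral>\<^sup>+ u. ennreal (\<bar>indicator E (x - inverse rho *\<^sub>R u) - indicator E x\<bar> * phi u) \<partial>lborel)" for x
  proof -
    define p where "p y = dilate rho phi (x - y)" for y
    have pm[measurable]: "p \<in> borel_measurable borel" unfolding p_def by measurable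
    have pnn: "p y \<ge> 0" for y using phinn rho by (simp add: p_def dilate_def)
    have pN: "(\<integral>\<^sup>+ y. ennreal (p y) \<partial>lborel) = 1"
      using subst_phi[OF phim, where h="\<lambda>_. 1" and x=x and rho=rho] phinn rho phiN by (simp add: p_def)
    have pint: "integrable lborel p"
      by (rule integrableI_nn_integral_finite[where x=1]) (use pN pnn in auto)
    have p1: "(\<integral>y. p y \<partial>lborel) = 1"
      using integral_eq_nn_integral[of p lborel] pnn pN by simp
    define h where "h y = (\<bar>indicator E y - indicator E x\<bar> :: real)" for y :: "real^2"
    have hm[measurable]: "h \<in> borel_measurable borel" unfolding h_def by measurable
    have hnn: "0 \<le> h y" "h y \<le> 1" for y by (auto simp: h_def indicator_def)
    have hpint: "integrable lborel (\<lambda>y. h y * p y)"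
      by (rule Bochner_Integration.integrable_bound[OF pint]) (use hnn pnn in \<open>auto intro!: mult_left_le_one_le\<close>)
    have Ep: "integrable lborel (\<lambda>y. indicator E y * p y)"
      by (rule Bochner_Integration.integrable_bound[OF pint]) (use pnn in \<open>auto simp: indicator_def\<close>)
    have "conv (indicator E) (dilate rho phi) x = (\<integral>y. indicator E y * p y \<partial>lborel)"
      unfolding conv_def p_def by (rule integral_completion) measurable
    then have c: "conv (indicator E) (dilate rho phi) x - indicator E x = (\<integral>y. (indicator E y - indicator E x) * p y \<partial>lborel)"
      using p1 Ep pint by (simp add: left_diff_distrib)
    have "\<bar>\<integral>y. (indicator E y - indicator E x) * p y \<partial>lborel\<bar> \<le> (\<integral>y. h y * p y \<partial>lborel)"
      unfolding h_def using pnn by (intro integral_abs_bound[THEN order_trans] integral_mono hpint[unfolded h_def])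
        (auto simp: abs_mult intro!: Bochner_Integration.integrable_bound[OF hpint[unfolded h_def]])
    moreover have "(\<integral>y. h y * p y \<partial>lborel) \<le> 1"
      using integral_mono[OF hpint pint] hnn pnn p1 by (simp add: mult_left_le_one_le)
    moreover have KK: "K x = (\<integral>y. h y * p y \<partial>lborel)" by (simp add: K_def h_def p_def)
    ultimately have "(conv (indicator E) (dilate rho phi) x - indicator E x)\<^sup>2 \<le> K x"
      unfolding c by (metis sq_le)
    moreover have "ennreal (K x) = (\<integral>\<^sup>+ y. ennreal (h y * p y) \<partial>lborel)"
      unfolding KK by (rule nn_integral_eq_integral[symmetric]) (use hpint hnn pnn in auto)
    moreover have "\<dots> = (\<integral>\<^sup>+ u. ennreal (h (x - inverse rho *\<^sub>R u) * phi u) \<partial>lborel)"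
      unfolding p_def by (rule subst_phi) (use hnn phinn rho in auto)
    ultimately show ?thesis by (simp add: h_def)
  qed
  have "(\<integral>\<^sup>+ x. ennreal ((conv (indicator E) (dilate rho phi) x - indicator E x)\<^sup>2) \<partial>lebesgue)
      = (\<integral>\<^sup>+ x. ennreal ((conv (indicator E) (dilate rho phi) x - indicator E x)\<^sup>2) \<partial>lborel)"
    by (rule nn_integral_completion)
  also have "\<dots> \<le> (\<integral>\<^sup>+ x. ennreal (K x) \<partial>lborel)"
    using pt by (intro nn_integral_mono ennreal_leI) blast
  also have "\<dots> = (\<integral>\<^sup>+ x. (\<integral>\<^sup>+ u. ennreal (\<bar>indicator E (x - inverse rho *\<^sub>R u) - indicator E x\<bar> * phi u) \<partial>lborel) \<partial>lborel)"
    using pt by simp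
  also have "\<dots> = (\<integral>\<^sup>+ u. (\<integral>\<^sup>+ x. ennreal (\<bar>indicator E (x - inverse rho *\<^sub>R u) - indicator E x\<bar> * phi u) \<partial>lborel) \<partial>lborel)"
    by (rule lborel_pair.Fubini'[symmetric]) measurable
  also have "\<dots> = (\<integral>\<^sup>+ u. ennreal (phi u) * Gt E (inverse rho *\<^sub>R u) \<partial>lborel)"
  proof (intro nn_integral_cong)
    fix u :: "real^2"
    have "(\<integral>\<^sup>+ x. ennreal (\<bar>indicator E (x - inverse rho *\<^sub>R u) - indicator E x\<bar> * phi u) \<partial>lborel)
        = (\<integral>\<^sup>+ x. ennreal (phi u) * ennreal \<bar>indicator E (x - inverse rho *\<^sub>R u) - indicator E x\<bar> \<partial>lborel)"
      using phinn by (intro nn_integral_cong) (simp add: ennreal_mult' mult.commute)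
    also have "\<dots> = ennreal (phi u) * Gt E (inverse rho *\<^sub>R u)"
      unfolding Gt_def by (rule nn_integral_cmult) measurable
    finally show "(\<integral>\<^sup>+ x. ennreal (\<bar>indicator E (x - inverse rho *\<^sub>R u) - indicator E x\<bar> * phi u) \<partial>lborel)
        = ennreal (phi u) * Gt E (inverse rho *\<^sub>R u)" .
  qed
  finally show ?thesis .
qed




lemma L2_small:
  fixes phi :: "real^2 \<Rightarrow> real"
  assumes phim[measurable]: "phi \<in> borel_measurable borel" and phinn: "\<And>y. phi y \<ge> 0"
    and phii: "integrable lborel phi" and phi1: "(\<integral>x. phi x \<partial>lborel) = 1"
    and gE: "good E" and eps: "eps > 0"
  shows "\<exists>rho>0. (\<integral>\<^sup>+ x. ennreal ((conv (indicator E) (dilate rho phi) x - indicator E x)\<^sup>2) \<partial>lebesgue) \<le> ennreal eps"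
proof -
  have E[measurable]: "E \<in> sets borel" and Esub: "E \<subseteq> cbox 0 One"
    using gE by (auto simp: good_def)
  have phiN: "(\<integral>\<^sup>+ u. ennreal (phi u) \<partial>lborel) = 1"
    using nn_integral_eq_integral[OF phii] phinn phi1 by simp
  define g where "g z = enn2real (Gt E z)" for z
  have gm[measurable]: "g \<in> borel_measurable borel" unfolding g_def[abs_def] by measurable
  have Gtop: "Gt E z \<noteq> top" for z
  proof
    assume "Gt E z = top"
    then show False using Gt_le[OF E Esub, of z] by (simp add: top_unique)
  qed
  have Gg: "Gt E z = ennreal (g z)" for z
    using Gtop[of z] by (simp add: g_def less_top[symmetric])
  have g2: "0 \<le> g z \<and> g z \<le> 2" for z
  proof -
    have "ennreal (g z) \<le> 2" using Gt_le[OF E Esub, of z] Gg[of z] by simp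
    then have "g z \<le> 2" using ennreal_le_iff2 by force
    then show ?thesis by (simp add: g_def)
  qed
  have glim: "(g \<longlongrightarrow> 0) (at 0)"
    unfolding g_def using tendsto_enn2real[of "Gt E" 0] Gt_tendsto[OF gE] by simp
  have g0: "g 0 = 0" by (simp add: g_def Gt_0)
  have gc: "isCont g 0" unfolding isCont_def g0 by (rule glim)
  define s where "s n u = phi u * g (inverse (real n) *\<^sub>R u)" for n u
  have sm[measurable]: "s n \<in> borel_measurable borel" for n unfolding s_def by measurable
  have lim: "(\<lambda>n. (\<integral>\<^sup>+x. norm (0 - s n x) \<partial>lborel)) \<longlonglongrightarrow> 0"
  proof (rule nn_integral_dominated_convergence_norm[where w="\<lambda>u. 2 * phi u"])
    show "AE x in lborel. norm (s j x) \<le> 2 * phi x" for j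
    proof (intro AE_I2)
      fix x
      have "norm (s j x) = phi x * g (inverse (real j) *\<^sub>R x)" using phinn[of x] g2 by (simp add: s_def abs_mult)
      also have "\<dots> \<le> phi x * 2" by (rule mult_left_mono) (use g2 phinn in auto)
      finally show "norm (s j x) \<le> 2 * phi x" by simp
    qed
    show "(\<integral>\<^sup>+ x. ennreal (2 * phi x) \<partial>lborel) < \<infinity>"
      using phinn phiN by (simp add: ennreal_mult nn_integral_cmult)
    show "AE x in lborel. (\<lambda>n. s n x) \<longlonglongrightarrow> 0"
    proof (intro AE_I2)
      fix u :: "real^2"
      have "(\<lambda>n. inverse (real n) *\<^sub>R u) \<longlonglongrightarrow> 0 *\<^sub>R u"
        by (intro tendsto_scaleR lim_inverse_n tendsto_const)
      then have "(\<lambda>n. g (inverse (real n) *\<^sub>R u)) \<longlonglongrightarrow> g 0"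
        using isCont_tendsto_compose[OF gc] by simp
      then show "(\<lambda>n. s n u) \<longlonglongrightarrow> 0"
        unfolding s_def using tendsto_mult[OF tendsto_const[of "phi u"]] g0 by fastforce
    qed
  qed auto
  have eqs: "(\<integral>\<^sup>+x. norm (0 - s n x) \<partial>lborel) = (\<integral>\<^sup>+ u. ennreal (phi u) * Gt E (inverse (real n) *\<^sub>R u) \<partial>lborel)" for n
  proof (intro nn_integral_cong)
    fix u
    have "ennreal (norm (0 - s n u)) = ennreal (phi u * g (inverse (real n) *\<^sub>R u))"
      using phinn[of u] g2 by (simp add: s_def abs_mult)
    also have "\<dots> = ennreal (phi u) * ennreal (g (inverse (real n) *\<^sub>R u))"
      by (rule ennreal_mult) (use phinn g2 in auto)
    finally show "ennreal (norm (0 - s n u)) = ennreal (phi u) * Gt E (inverse (real n) *\<^sub>R u)"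
      by (simp only: Gg)
  qed
  have "eventually (\<lambda>n. (\<integral>\<^sup>+ u. ennreal (phi u) * Gt E (inverse (real n) *\<^sub>R u) \<partial>lborel) < ennreal eps) sequentially"
    using order_tendstoD(2)[OF lim[unfolded eqs]] eps by simp
  moreover have "eventually (\<lambda>n. n \<ge> (1::nat)) sequentially" by (rule eventually_ge_at_top)
  ultimately have "eventually (\<lambda>n. (\<integral>\<^sup>+ u. ennreal (phi u) * Gt E (inverse (real n) *\<^sub>R u) \<partial>lborel) < ennreal eps \<and> n \<ge> 1) sequentially"
    by (rule eventually_conj)
  then obtain N where "\<forall>n\<ge>N. (\<integral>\<^sup>+ u. ennreal (phi u) * Gt E (inverse (real n) *\<^sub>R u) \<partial>lborel) < ennreal eps \<and> n \<ge> 1"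
    unfolding eventually_sequentially by blast
  then obtain n where n: "(\<integral>\<^sup>+ u. ennreal (phi u) * Gt E (inverse (real n) *\<^sub>R u) \<partial>lborel) < ennreal eps" "n \<ge> 1"
    by blast
  show ?thesis
  proof (intro exI conjI)
    show "real n > 0" using n by simp
    show "(\<integral>\<^sup>+ x. ennreal ((conv (indicator E) (dilate (real n) phi) x - indicator E x)\<^sup>2) \<partial>lebesgue) \<le> ennreal eps"
      using L2_bound[OF phim phinn phii phi1 E, of "real n"] n by simp
  qed
qed




lemma translate_integral:
  fixes f :: "real^2 \<Rightarrow> real"
  assumes [measurable]: "f \<in> borel_measurable borel"
  shows "(\<integral>x. f x \<partial>lborel) = (\<integral>y. f (z + y) \<partial>lborel)"
proof -
  have "(\<integral>x. f x \<partial>lborel) = (\<integral>x. f x \<partial>distr lborel borel ((+) z))"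
    by (simp add: lborel_distr_plus)
  also have "\<dots> = (\<integral>y. f (z + y) \<partial>lborel)"
    by (subst integral_distr) auto
  finally show ?thesis .
qed

lemma cos_bound:
  assumes gE: "good E"
  shows "\<exists>T. \<forall>xi::real^2. norm xi \<ge> T \<longrightarrow> (\<integral>x\<in>E. \<bar>cos (xi \<bullet> x)\<bar> \<partial>lebesgue) \<ge> measure lebesgue E / 3"
proof -
  have E[measurable]: "E \<in> sets borel" and Esub: "E \<subseteq> cbox 0 One"
    using gE by (auto simp: good_def)
  define m where "m = measure lborel E"
  have mE: "measure lebesgue E = m" unfolding m_def by (rule measure_completion) simp
  have Efin: "emeasure lborel E \<noteq> \<infinity>"
    using emeasure_cube_le[OF Esub] by (metis ennreal_one_neq_top infinity_ennreal_def top.extremum_unique)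
  have Eint: "integrable lborel (indicator E :: real^2 \<Rightarrow> real)"
    using Efin by (simp add: less_top[symmetric])
  have intE: "(\<integral>x. indicator E x \<partial>lborel) = m"
    unfolding m_def using Efin by simp
  have setint: "(\<integral>x\<in>E. f x \<partial>lebesgue) = (\<integral>x. indicator E x * f x \<partial>lborel)"
    if [measurable]: "f \<in> borel_measurable borel" for f :: "real^2 \<Rightarrow> real"
    unfolding set_lebesgue_integral_def by (simp add: integral_completion)
  show ?thesis
  proof (cases "m = 0")
    case True
    show ?thesis
    proof (intro exI[of _ 0] allI impI)
      fix xi :: "real^2"
      have "(\<integral>x\<in>E. \<bar>cos (xi \<bullet> x)\<bar> \<partial>lebesgue) \<ge> 0"
        by (subst setint) (auto intro!: integral_nonneg)
      then show "(\<integral>x\<in>E. \<bar>cos (xi \<bullet> x)\<bar> \<partial>lebesgue) \<ge> measure lebesgue E / 3"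
        using True mE by simp
    qed
  next
    case False
    have "m \<ge> 0" unfolding m_def by (rule measure_nonneg)
    then have mpos: "m > 0" using False by linarith
    define g where "g z = enn2real (Gt E z)" for z
    have Gtop: "Gt E z \<noteq> top" for z
    proof
      assume "Gt E z = top"
      then show False using Gt_le[OF E Esub, of z] by (simp add: top_unique)
    qed
    have glim: "(g \<longlongrightarrow> 0) (at 0)"
      unfolding g_def using tendsto_enn2real[of "Gt E" 0] Gt_tendsto[OF gE] by simp
    obtain d where d: "d > 0" "\<And>z. z \<noteq> 0 \<and> norm (z - 0) < d \<Longrightarrow> norm (g z - 0) < 2 * m / 3"
      using LIM_D[OF glim, of "2 * m / 3"] mpos by auto
    show ?thesis
    proof (intro exI[of _ "pi / d + 1"] allI impI)
      fix xi :: "real^2"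
      assume xi: "norm xi \<ge> pi / d + 1"
      have xipos: "norm xi > 0" using xi d pi_gt_zero by (smt (verit) divide_pos_pos)
      define eta where "eta = 2 *\<^sub>R xi"
      have neta: "norm eta = 2 * norm xi" by (simp add: eta_def)
      define z where "z = (pi / (norm eta)^2) *\<^sub>R eta"
      have etaz: "eta \<bullet> z = pi"
        using xipos neta by (simp add: z_def power2_norm_eq_inner[symmetric] power2_eq_square)
      have nz: "norm z = pi / norm eta"
        using xipos neta by (simp add: z_def power2_eq_square)
      have z0: "z \<noteq> 0" using etaz by auto
      have "pi / d < norm xi" using xi by simp
      then have "pi / norm xi < d" using d xipos pi_gt_zero
        by (simp add: divide_less_eq mult.commute pos_divide_less_eq)
      then have zd: "norm z < d" using nz neta xipos pi_gt_zero
        by (smt (verit) divide_le_eq_1_pos divide_pos_pos frac_le)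
      have gz: "g z < 2 * m / 3" using d(2)[of z] z0 zd by simp
      define A where "A = (\<integral>x. indicator E x * cos (eta \<bullet> x) \<partial>lborel)"
      have int1: "integrable lborel (\<lambda>x. indicator E x * cos (eta \<bullet> x))"
        by (rule Bochner_Integration.integrable_bound[OF Eint]) (auto simp: indicator_def)
      have Ez: "integrable lborel (\<lambda>x. indicator E (x - z) :: real)"
      proof (rule integrableI_bounded)
        show "(\<lambda>x. indicator E (x - z) :: real) \<in> borel_measurable lborel" by measurable
        have "(\<integral>\<^sup>+ x. ennreal (norm (indicator E (x - z) :: real)) \<partial>lborel) = (\<integral>\<^sup>+ x. indicator E (x - z) \<partial>lborel)"
          by (intro nn_integral_cong) (auto simp: indicator_def)
        also have "\<dots> = (\<integral>\<^sup>+ x. indicator E x \<partial>lborel)"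
          by (rule nn_translate[of "indicator E"]) auto
        also have "\<dots> = emeasure lborel E" by simp
        finally show "(\<integral>\<^sup>+ x. ennreal (norm (indicator E (x - z) :: real)) \<partial>lborel) < \<infinity>"
          using Efin by (simp add: less_top[symmetric])
      qed
      have int2: "integrable lborel (\<lambda>x. indicator E (x - z) * cos (eta \<bullet> x))"
        by (rule Bochner_Integration.integrable_bound[OF Ez]) (auto simp: indicator_def)
      have B: "(\<integral>x. indicator E (x - z) * cos (eta \<bullet> x) \<partial>lborel) = - A"
      proof -
        have "(\<integral>x. indicator E (x - z) * cos (eta \<bullet> x) \<partial>lborel) = (\<integral>y. indicator E (z + y - z) * cos (eta \<bullet> (z + y)) \<partial>lborel)"
          by (rule translate_integral) measurable
        also have "\<dots> = (\<integral>y. - (indicator E y * cos (eta \<bullet> y)) \<partial>lborel)"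
          by (intro Bochner_Integration.integral_cong) (auto simp: inner_add_right etaz cos_periodic_pi add.commute)
        also have "\<dots> = - A" unfolding A_def by simp
        finally show ?thesis .
      qed
      define D where "D x = (\<bar>indicator E (x - z) - indicator E x\<bar> :: real)" for x
      have Dm[measurable]: "D \<in> borel_measurable borel" unfolding D_def by measurable
      have Dint: "integrable lborel D"
        by (rule Bochner_Integration.integrable_bound[OF Bochner_Integration.integrable_add[OF Ez Eint]])
           (auto simp: D_def indicator_def)
      have gD: "g z = (\<integral>x. D x \<partial>lborel)"
        unfolding g_def Gt_def by (subst integral_eq_nn_integral) (auto simp: D_def)
      have "2 * A = (\<integral>x. (indicator E x - indicator E (x - z)) * cos (eta \<bullet> x) \<partial>lborel)"
        using B int1 int2 by (simp add: left_diff_distrib A_def)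
      also have "\<dots> \<ge> - (\<integral>x. D x \<partial>lborel)"
      proof -
        have "\<bar>\<integral>x. (indicator E x - indicator E (x - z)) * cos (eta \<bullet> x) \<partial>lborel\<bar>
            \<le> (\<integral>x. \<bar>(indicator E x - indicator E (x - z)) * cos (eta \<bullet> x)\<bar> \<partial>lborel)"
          by (rule integral_abs_bound)
        also have "\<dots> \<le> (\<integral>x. D x \<partial>lborel)"
        proof (rule integral_mono[OF _ Dint])
          show "integrable lborel (\<lambda>x. \<bar>(indicator E x - indicator E (x - z)) * cos (eta \<bullet> x)\<bar>)"
            by (rule Bochner_Integration.integrable_bound[OF Dint]) (auto simp: D_def abs_mult indicator_def)
          show "\<bar>(indicator E x - indicator E (x - z)) * cos (eta \<bullet> x)\<bar> \<le> D x" for x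
            by (auto simp: D_def abs_mult indicator_def)
        qed
        finally show ?thesis by linarith
      qed
      finally have A2: "2 * A \<ge> - g z" using gD by simp
      have "(\<integral>x\<in>E. \<bar>cos (xi \<bullet> x)\<bar> \<partial>lebesgue) = (\<integral>x. indicator E x * \<bar>cos (xi \<bullet> x)\<bar> \<partial>lborel)"
        by (rule setint) measurable
      also have "\<dots> \<ge> (\<integral>x. (1/2) * (indicator E x + indicator E x * cos (eta \<bullet> x)) \<partial>lborel)"
      proof (rule integral_mono)
        show "integrable lborel (\<lambda>x. (1/2) * (indicator E x + indicator E x * cos (eta \<bullet> x)))"
          using Eint int1 by simp
        show "integrable lborel (\<lambda>x. indicator E x * \<bar>cos (xi \<bullet> x)\<bar>)"
          by (rule Bochner_Integration.integrable_bound[OF Eint]) (auto simp: indicator_def)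
        fix x
        have c2: "cos (eta \<bullet> x) = 2 * (cos (xi \<bullet> x))^2 - 1"
          by (simp add: eta_def cos_double_cos)
        have "(cos (xi \<bullet> x))^2 \<le> \<bar>cos (xi \<bullet> x)\<bar>"
          by (rule sq_le) (auto simp: abs_cos_le_one)
        then show "(1/2) * (indicator E x + indicator E x * cos (eta \<bullet> x)) \<le> indicator E x * \<bar>cos (xi \<bullet> x)\<bar>"
          unfolding c2 by (auto simp: indicator_def)
      qed
      also have "(\<integral>x. (1/2) * (indicator E x + indicator E x * cos (eta \<bullet> x)) \<partial>lborel) = (m + A) / 2"
        using Eint int1 intE by (simp add: A_def)
      finally have "(\<integral>x\<in>E. \<bar>cos (xi \<bullet> x)\<bar> \<partial>lebesgue) \<ge> (m + A) / 2" .
      then show "(\<integral>x\<in>E. \<bar>cos (xi \<bullet> x)\<bar> \<partial>lebesgue) \<ge> measure lebesgue E / 3"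
        using A2 gz mE by simp
    qed
  qed
qed




lemma null_of_negligible:
  assumes "closed S" "negligible S"
  shows "S \<in> null_sets lborel"
proof -
  have "S \<in> sets lborel" using assms(1) by (simp add: borel_closed)
  then show ?thesis using assms(2) null_sets_completion_iff[of S lborel] by (simp add: negligible_iff_null_sets)
qed

lemma good_cube: "good (cbox 0 One)"
  unfolding good_def
  using null_of_negligible[OF _ negligible_convex_frontier[OF convex_box(1)]] by auto

lemma frontier_cos:
  "frontier {x::real^2. 0 \<le> cos (xi \<bullet> x)} \<subseteq> {x. cos (xi \<bullet> x) = 0}"
proof
  fix x assume x: "x \<in> frontier {x::real^2. 0 \<le> cos (xi \<bullet> x)}"
  have cl: "closed {x::real^2. 0 \<le> cos (xi \<bullet> x)}"
    by (intro closed_Collect_le continuous_intros)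
  have op: "open {x::real^2. 0 < cos (xi \<bullet> x)}"
    by (intro open_Collect_less continuous_intros)
  have "x \<in> {x. 0 \<le> cos (xi \<bullet> x)}" using x cl by (simp add: frontier_def closure_closed)
  moreover have "x \<notin> {x. 0 < cos (xi \<bullet> x)}"
  proof
    assume "x \<in> {x. 0 < cos (xi \<bullet> x)}"
    then have "x \<in> interior {x::real^2. 0 \<le> cos (xi \<bullet> x)}"
      using interior_maximal[OF _ op, of "{x::real^2. 0 \<le> cos (xi \<bullet> x)}"] by force
    then show False using x by (simp add: frontier_def)
  qed
  ultimately show "x \<in> {x. cos (xi \<bullet> x) = 0}" by simp
qed

lemma cos_zero_negligible:
  assumes "xi \<noteq> (0::real^2)"
  shows "negligible {x::real^2. cos (xi \<bullet> x) = 0}"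
proof -
  have eq: "{x::real^2. cos (xi \<bullet> x) = 0} = (\<Union>i\<in>(UNIV::int set). {x. xi \<bullet> x = real_of_int i * pi + pi / 2})"
    by (auto simp: cos_zero_iff_int2)
  show ?thesis unfolding eq
    by (rule negligible_countable_Union) (use assms in \<open>auto intro!: negligible_hyperplane\<close>)
qed

lemma good_split:
  assumes gE: "good E" and xi: "xi \<noteq> 0"
  shows "good (E \<inter> {x. (0 \<le> cos (xi \<bullet> x)) = b})"
proof -
  have E[measurable]: "E \<in> sets borel" and Esub: "E \<subseteq> cbox 0 One" and fr: "frontier E \<in> null_sets lborel"
    using gE by (auto simp: good_def)
  define P where "P = {x::real^2. 0 \<le> cos (xi \<bullet> x)}"
  have Pm: "P \<in> sets borel" unfolding P_def by measurable
  have set: "{x. (0 \<le> cos (xi \<bullet> x)) = b} = (if b then P else - P)"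
    by (auto simp: P_def)
  have frP: "frontier {x. (0 \<le> cos (xi \<bullet> x)) = b} \<subseteq> {x. cos (xi \<bullet> x) = 0}"
    unfolding set using frontier_cos[of xi] by (cases b) (simp_all add: P_def frontier_complement)
  have Z: "{x::real^2. cos (xi \<bullet> x) = 0} \<in> null_sets lborel"
    by (rule null_of_negligible[OF _ cos_zero_negligible[OF xi]]) (intro closed_Collect_eq continuous_intros)
  have "frontier (E \<inter> {x. (0 \<le> cos (xi \<bullet> x)) = b}) \<in> null_sets lborel"
  proof (rule null_sets_subset[OF null_sets.Un[OF fr Z]])
    show "frontier (E \<inter> {x. (0 \<le> cos (xi \<bullet> x)) = b}) \<in> sets lborel"
      by (simp add: borel_closed)
    show "frontier (E \<inter> {x. (0 \<le> cos (xi \<bullet> x)) = b}) \<subseteq> frontier E \<union> {x. cos (xi \<bullet> x) = 0}"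
      using frontier_Int_subset[of E] frP by blast
  qed
  moreover have "E \<inter> {x. (0 \<le> cos (xi \<bullet> x)) = b} \<in> sets borel"
    unfolding set using Pm by (cases b) (simp_all add: Diff_eq[symmetric] Compl_eq_Diff_UNIV sets.Diff)
  ultimately show ?thesis using Esub by (auto simp: good_def)
qed




lemma choose_xi:
  fixes phi :: "real^2 \<Rightarrow> real"
  assumes phim: "phi \<in> borel_measurable borel" and phinn: "\<And>y. phi y \<ge> 0"
    and phii: "integrable lborel phi" and phi1: "(\<integral>x. phi x \<partial>lborel) = 1"
    and gE: "good E" and eps: "eps > 0"
    and Sb: "\<forall>R. \<exists>c r. r \<ge> R \<and> ball c r \<subseteq> S'"
  shows "\<exists>xi rho. rho > 0 \<and> xi \<noteq> 0 \<and> ball xi rho \<subseteq> S' \<and>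
     (\<integral>\<^sup>+ x. ennreal ((conv (indicator E) (dilate rho phi) x - indicator E x)\<^sup>2) \<partial>lebesgue) \<le> ennreal eps \<and>
     (\<integral>x\<in>E. \<bar>cos (xi \<bullet> x)\<bar> \<partial>lebesgue) \<ge> measure lebesgue E / 3"
proof -
  obtain rho where rho: "rho > 0" "(\<integral>\<^sup>+ x. ennreal ((conv (indicator E) (dilate rho phi) x - indicator E x)\<^sup>2) \<partial>lebesgue) \<le> ennreal eps"
    using L2_small[OF phim phinn phii phi1 gE eps] by blast
  obtain T where T: "\<And>xi::real^2. norm xi \<ge> T \<Longrightarrow> (\<integral>x\<in>E. \<bar>cos (xi \<bullet> x)\<bar> \<partial>lebesgue) \<ge> measure lebesgue E / 3"
    using cos_bound[OF gE] by blast
  define t where "t = \<bar>T\<bar> + 1"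
  obtain c r where cr: "r \<ge> rho + t" "ball c r \<subseteq> S'" using Sb by blast
  define u :: "real^2" where "u = (if c $ 1 \<ge> 0 then axis 1 1 else - axis 1 1)"
  define xi where "xi = c + t *\<^sub>R u"
  have nu: "norm u = 1" by (simp add: u_def)
  have "\<bar>xi $ 1\<bar> \<ge> t" using t_def by (auto simp: xi_def u_def axis_def)
  then have nxi: "norm xi \<ge> t" using component_le_norm_cart[of xi 1] by linarith
  show ?thesis
  proof (intro exI conjI)
    show "rho > 0" by (rule rho)
    show "xi \<noteq> 0" using nxi t_def by auto
    show "ball xi rho \<subseteq> S'"
    proof
      fix y assume "y \<in> ball xi rho"
      then have "dist xi y < rho" by simp
      moreover have "dist c xi = t" using nu t_def by (simp add: xi_def dist_norm)
      ultimately have "dist c y < r" using dist_triangle[of c y xi] cr(1) by linarith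
      then show "y \<in> S'" using cr(2) by auto
    qed
    show "(\<integral>\<^sup>+ x. ennreal ((conv (indicator E) (dilate rho phi) x - indicator E x)\<^sup>2) \<partial>lebesgue) \<le> ennreal eps"
      by (rule rho)
    show "(\<integral>x\<in>E. \<bar>cos (xi \<bullet> x)\<bar> \<partial>lebesgue) \<ge> measure lebesgue E / 3"
      by (rule T) (use nxi t_def in linarith)
  qed
qed

definition Ew :: "(bool list \<Rightarrow> real^2) \<Rightarrow> bool list \<Rightarrow> (real^2) set" where
  "Ew xi w = cbox 0 One \<inter> {x. \<forall>i<length w. (0 \<le> cos (xi (take i w) \<bullet> x)) = (\<not> w ! i)}"

lemma Ew_Nil[simp]: "Ew xi [] = cbox 0 One"
  by (simp add: Ew_def)

lemma Ew_snoc: "Ew xi (w @ [b]) = Ew xi w \<inter> {x. (0 \<le> cos (xi w \<bullet> x)) = (\<not> b)}"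
  unfolding Ew_def
  by (auto simp: less_Suc_eq nth_append) 

lemma Ew_cong:
  assumes "\<And>v. length v < length w \<Longrightarrow> xi v = xi' v"
  shows "Ew xi w = Ew xi' w"
  unfolding Ew_def using assms by auto

lemma Ew_good:
  assumes "\<And>v. length v < length w \<Longrightarrow> xi v \<noteq> 0"
  shows "good (Ew xi w)"
  using assms
proof (induction w rule: rev_induct)
  case Nil
  then show ?case using good_cube by simp
next
  case (snoc b w)
  have "good (Ew xi w)" using snoc by auto
  moreover have "xi w \<noteq> 0" using snoc.prems by simp
  ultimately show ?case unfolding Ew_snoc by (rule good_split)
qed

lemma Ew_cover:
  assumes "x \<in> cbox 0 One"
  shows "\<exists>w. length w = l \<and> x \<in> Ew xi w"
proof (induction l)
  case 0
  then show ?case using assms by auto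
next
  case (Suc l)
  then obtain w where w: "length w = l" "x \<in> Ew xi w" by blast
  show ?case
    by (rule exI[of _ "w @ [\<not> (0 \<le> cos (xi w \<bullet> x))]"]) (use w in \<open>simp add: Ew_snoc\<close>)
qed

lemma Ew_unique:
  assumes "x \<in> Ew xi v" "x \<in> Ew xi w" "length v = length w"
  shows "v = w"
proof -
  have "\<forall>j<i. v ! j = w ! j" if "i \<le> length w" for i
    using that
  proof (induction i)
    case 0 then show ?case by simp
  next
    case (Suc i)
    then have IH: "\<forall>j<i. v ! j = w ! j" by simp
    have tk: "take i v = take i w"
      by (rule nth_equalityI) (use IH Suc.prems assms(3) in auto)
    have "(0 \<le> cos (xi (take i v) \<bullet> x)) = (\<not> v ! i)" using assms(1,3) Suc.prems by (auto simp: Ew_def)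
    moreover have "(0 \<le> cos (xi (take i w) \<bullet> x)) = (\<not> w ! i)" using assms(2) Suc.prems by (auto simp: Ew_def)
    ultimately have "v ! i = w ! i" using tk by simp
    then show ?case using IH less_Suc_eq by auto
  qed
  from this[of "length w"] show ?thesis using assms(3) by (intro nth_equalityI) auto
qed




lemma geo_sum: "L \<le> m \<Longrightarrow> (\<Sum>i<L. (2::nat) ^ (m - 1 - i)) + 2 ^ (m - L) = 2 ^ m"
proof (induction L)
  case 0 then show ?case by simp
next
  case (Suc L)
  then have IH: "(\<Sum>i<L. (2::nat) ^ (m - 1 - i)) + 2 ^ (m - L) = 2 ^ m" by simp
  have "m - L = Suc (m - 1 - L)" using Suc.prems by simp
  then have "(2::nat) ^ (m - L) = 2 ^ (m - 1 - L) + 2 ^ (m - Suc L)" by simp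
  then show ?case using IH by simp
qed

lemma tau_range:
  assumes "length w \<le> mu - 1" "mu \<ge> 1"
  shows "tau mu w \<in> {1..2^mu - 1}"
proof -
  let ?L = "length w"
  have s: "(\<Sum>i<?L. (if w ! i then 1 else 0) * (2::nat) ^ (mu - 1 - i)) \<le> (\<Sum>i<?L. 2 ^ (mu - 1 - i))"
    by (intro sum_mono) auto
  have g: "(\<Sum>i<?L. (2::nat) ^ (mu - 1 - i)) + 2 ^ (mu - ?L) = 2 ^ mu"
    using assms by (intro geo_sum) auto
  have "mu - ?L = Suc (mu - ?L - 1)" using assms by simp
  then have "(2::nat) ^ (mu - ?L) = 2 * 2 ^ (mu - ?L - 1)" by simp
  moreover have "(1::nat) \<le> 2 ^ (mu - ?L - 1)" by simp
  ultimately have "tau mu w \<le> 2 ^ mu - 1"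
    using s g unfolding tau_def by linarith
  moreover have "tau mu w \<ge> 1" unfolding tau_def by (simp add: Suc_le_eq)
  ultimately show ?thesis by simp
qed




definition GC :: "(real^2 \<Rightarrow> real) \<Rightarrow> (real^2) set \<Rightarrow> real \<Rightarrow> (real^2) set \<Rightarrow> real^2 \<Rightarrow> real \<Rightarrow> bool" where
  "GC phi S' eps E xi rho \<longleftrightarrow> rho > 0 \<and> xi \<noteq> 0 \<and> ball xi rho \<subseteq> S' \<and>
     (\<integral>\<^sup>+ x. ennreal ((conv (indicator E) (dilate rho phi) x - indicator E x)\<^sup>2) \<partial>lebesgue) \<le> ennreal eps \<and>
     (\<integral>x\<in>E. \<bar>cos (xi \<bullet> x)\<bar> \<partial>lebesgue) \<ge> measure lebesgue E / 3"

lemma choose_GC: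
  fixes phi :: "real^2 \<Rightarrow> real"
  assumes phim: "phi \<in> borel_measurable borel" and phinn: "\<And>y. phi y \<ge> 0"
    and phii: "integrable lborel phi" and phi1: "(\<integral>x. phi x \<partial>lborel) = 1"
    and gE: "good E" and eps: "eps > 0"
    and Sb: "\<forall>R. \<exists>c r. r \<ge> R \<and> ball c r \<subseteq> S'"
  shows "\<exists>p. GC phi S' eps E (fst p) (snd p)"
proof -
  obtain xi rho where "GC phi S' eps E xi rho"
    using choose_xi[OF assms] unfolding GC_def by blast
  then show ?thesis by (intro exI[of _ "(xi, rho)"]) simp
qed


theorem lemma8p6:
  fixes mu :: nat and S :: "nat \<Rightarrow> (real^2) set" and phi :: "real^2 \<Rightarrow> real"
  assumes mu_pos: "mu \<ge> 1"
    and phi_schwartz: "schwartz phi"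
    and phi_nonneg: "\<forall>x. phi x \<ge> 0"
    and phi_int: "integrable lborel phi" "(\<integral>x. phi x \<partial>lborel) = 1"
    and phi_fourier: "closure {xi. fourier phi xi \<noteq> 0} \<subseteq> ball 0 1"
    and S_disj: "\<forall>i\<in>{1..2^mu - 1}. \<forall>j\<in>{1..2^mu - 1}. i \<noteq> j \<longrightarrow> S i \<inter> S j = {}"
    and S_balls: "\<forall>i\<in>{1..2^mu - 1}. \<forall>R. \<exists>c r. r \<ge> R \<and> ball c r \<subseteq> S i"
  shows "\<exists>(E :: bool list \<Rightarrow> (real^2) set) (xi :: bool list \<Rightarrow> real^2) (rho :: bool list \<Rightarrow> real).
    (\<forall>w\<in>W mu. E w \<in> sets lebesgue \<and> rho w > 0 \<and> E w \<subseteq> cbox 0 One) \<and>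
    E [] = cbox 0 One \<and>
    (\<forall>w. length w + 2 \<le> mu \<longrightarrow>
        E w = E (w @ [False]) \<union> E (w @ [True]) \<and> E (w @ [False]) \<inter> E (w @ [True]) = {}) \<and>
    (\<forall>l<mu. (\<Union>w\<in>{w. length w = l}. E w) = cbox 0 One \<and>
        (\<forall>v w. length v = l \<and> length w = l \<and> v \<noteq> w \<longrightarrow> E v \<inter> E w = {})) \<and>
    (\<forall>x\<in>cbox 0 One. (\<Sum>w\<in>W mu. indicator (E w) x) = (real mu)) \<and>
    (\<forall>w\<in>W mu.
        (\<integral>\<^sup>+ x. ennreal ((conv (indicator (E w)) (dilate (rho w) phi) x - indicator (E w) x)\<^sup>2) \<partial>lebesgue)
          \<le> ennreal ((2 powr (- (real mu + 10)))\<^sup>2) \<and>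
        (\<integral>x\<in>E w. \<bar>cos (xi w \<bullet> x)\<bar> \<partial>lebesgue) \<ge> measure lebesgue (E w) / 3 \<and>
        ball (xi w) (rho w) \<subseteq> S (tau mu w)) \<and>
    (\<forall>w. length w + 2 \<le> mu \<longrightarrow>
        (\<forall>x\<in>E (w @ [False]). cos (xi w \<bullet> x) \<ge> 0) \<and>
        (\<forall>x\<in>E (w @ [True]). cos (xi w \<bullet> x) < 0))"

proof -
  have "\<forall>x. phi differentiable (at x)"
    using phi_schwartz partial_derivs.base[of phi] unfolding schwartz_def by blast
  then have "continuous_on UNIV phi"
    by (intro differentiable_imp_continuous_on) (simp add: differentiable_on_def)
  then have phim: "phi \<in> borel_measurable borel" by (rule borel_measurable_continuous_onI)
  have phinn: "\<And>y. phi y \<ge> 0" using phi_nonneg by blast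
  define eps where "eps = (2 powr (- (real mu + 10)))\<^sup>2"
  have eps: "eps > 0" unfolding eps_def by simp
  define Q where "Q xi rho w \<longleftrightarrow> GC phi (S (tau mu w)) eps (Ew xi w) (xi w) (rho w)"
    for xi :: "bool list \<Rightarrow> real^2" and rho :: "bool list \<Rightarrow> real" and w
  have ind: "n \<le> mu \<Longrightarrow> \<exists>xi rho. \<forall>w. length w < n \<longrightarrow> Q xi rho w" for n
  proof (induction n)
    case 0 then show ?case by simp
  next
    case (Suc n)
    then obtain xi rho where xr: "\<And>w. length w < n \<Longrightarrow> Q xi rho w" by auto
    have "\<forall>w. \<exists>p. length w = n \<longrightarrow> GC phi (S (tau mu w)) eps (Ew xi w) (fst p) (snd p)"
    proof
      fix w :: "bool list"
      show "\<exists>p. length w = n \<longrightarrow> GC phi (S (tau mu w)) eps (Ew xi w) (fst p) (snd p)"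
      proof (cases "length w = n")
        case False then show ?thesis by blast
      next
        case True
        have gE: "good (Ew xi w)"
          by (rule Ew_good) (use xr True in \<open>auto simp: Q_def GC_def\<close>)
        have "tau mu w \<in> {1..2^mu - 1}"
          by (rule tau_range) (use True Suc.prems in auto)
        then have Sb: "\<forall>R. \<exists>c r. r \<ge> R \<and> ball c r \<subseteq> S (tau mu w)" using S_balls by blast
        show ?thesis using choose_GC[OF phim phinn phi_int(1) phi_int(2) gE eps Sb] by blast
      qed
    qed
    then have "\<exists>f. \<forall>w. length w = n \<longrightarrow> GC phi (S (tau mu w)) eps (Ew xi w) (fst (f w)) (snd (f w))"
      by (rule choice)
    then obtain f where f: "\<forall>w. length w = n \<longrightarrow> GC phi (S (tau mu w)) eps (Ew xi w) (fst (f w)) (snd (f w))"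
      by blast
    define xi' where "xi' w = (if length w = n then fst (f w) else xi w)" for w
    define rho' where "rho' w = (if length w = n then snd (f w) else rho w)" for w
    have EE: "Ew xi' w = Ew xi w" if "length w \<le> n" for w
      by (rule Ew_cong) (use that in \<open>auto simp: xi'_def\<close>)
    show ?case
    proof (intro exI[of _ xi'] exI[of _ rho'] allI impI)
      fix w :: "bool list" assume "length w < Suc n"
      then consider "length w < n" | "length w = n" by linarith
      then show "Q xi' rho' w"
      proof cases
        case 1
        then show ?thesis using xr[OF 1] EE[of w] by (simp add: Q_def xi'_def rho'_def)
      next
        case 2
        then show ?thesis using f EE[of w] by (simp add: Q_def xi'_def rho'_def)
      qed
    qed
  qed
  obtain xi rho where xr: "\<And>w. length w < mu \<Longrightarrow> Q xi rho w" using ind[of mu] by auto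
  have Wm: "w \<in> W mu \<longleftrightarrow> length w < mu" for w using mu_pos by (auto simp: W_def)
  have Wfin: "finite (W mu)"
  proof -
    have "W mu \<subseteq> {xs. set xs \<subseteq> (UNIV::bool set) \<and> length xs \<le> mu - 1}" by (auto simp: W_def)
    moreover have "finite {xs. set xs \<subseteq> (UNIV::bool set) \<and> length xs \<le> mu - 1}"
      by (rule finite_lists_length_le) simp
    ultimately show ?thesis by (rule finite_subset)
  qed
  have good_all: "good (Ew xi w)" if "length w \<le> mu" for w
    by (rule Ew_good) (use xr that in \<open>auto simp: Q_def GC_def\<close>)
  show ?thesis
  proof (intro exI[of _ "Ew xi"] exI[of _ xi] exI[of _ rho] conjI ballI allI impI)
    fix w assume w: "w \<in> W mu"
    then have lw: "length w < mu" using Wm by simp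
    have gw: "good (Ew xi w)" using good_all lw by simp
    then have "Ew xi w \<in> sets borel" by (simp add: good_def)
    then show "Ew xi w \<in> sets lebesgue" by simp
    show "rho w > 0" using xr[OF lw] by (simp add: Q_def GC_def)
    show "Ew xi w \<subseteq> cbox 0 One" using gw by (simp add: good_def)
  next
    show "Ew xi [] = cbox 0 One" by simp
  next
    fix w :: "bool list"
    show "Ew xi w = Ew xi (w @ [False]) \<union> Ew xi (w @ [True])" by (auto simp: Ew_snoc)
    show "Ew xi (w @ [False]) \<inter> Ew xi (w @ [True]) = {}" by (auto simp: Ew_snoc)
  next
    fix l assume "l < mu"
    show "(\<Union>w\<in>{w. length w = l}. Ew xi w) = cbox 0 One"
    proof
      show "(\<Union>w\<in>{w. length w = l}. Ew xi w) \<subseteq> cbox 0 One" by (auto simp: Ew_def)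
      show "cbox 0 One \<subseteq> (\<Union>w\<in>{w. length w = l}. Ew xi w)"
      proof
        fix x assume "x \<in> (cbox 0 One :: (real^2) set)"
        then obtain w where "length w = l" "x \<in> Ew xi w" using Ew_cover[of x l xi] by blast
        then show "x \<in> (\<Union>w\<in>{w. length w = l}. Ew xi w)" by blast
      qed
    qed
    fix v w :: "bool list" assume vw: "length v = l \<and> length w = l \<and> v \<noteq> w"
    show "Ew xi v \<inter> Ew xi w = {}"
    proof (rule ccontr)
      assume "Ew xi v \<inter> Ew xi w \<noteq> {}"
      then obtain x where x1: "x \<in> Ew xi v" and x2: "x \<in> Ew xi w" by blast
      have "v = w" using Ew_unique[OF x1 x2] vw by simp
      then show False using vw by simp
    qed
  next
    fix x :: "real^2" assume x: "x \<in> cbox 0 One"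
    have "(\<Sum>w\<in>W mu. indicator (Ew xi w) x) = (\<Sum>w\<in>W mu. indicator {w. x \<in> Ew xi w} w :: real)"
      by (intro sum.cong) (auto simp: indicator_def)
    also have "\<dots> = (\<Sum>w\<in>W mu \<inter> {w. x \<in> Ew xi w}. 1)"
      using Wfin by (simp add: sum.inter_restrict indicator_def)
    also have "\<dots> = real (card (W mu \<inter> {w. x \<in> Ew xi w}))" by simp
    also have "card (W mu \<inter> {w. x \<in> Ew xi w}) = card {..<mu}"
    proof (rule bij_betw_same_card[of length])
      show "bij_betw length (W mu \<inter> {w. x \<in> Ew xi w}) {..<mu}"
      proof (rule bij_betwI')
        fix v w assume "v \<in> W mu \<inter> {w. x \<in> Ew xi w}" "w \<in> W mu \<inter> {w. x \<in> Ew xi w}"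
        then show "(length v = length w) = (v = w)" using Ew_unique[of x xi v w] by auto
      next
        fix w assume "w \<in> W mu \<inter> {w. x \<in> Ew xi w}"
        then show "length w \<in> {..<mu}" using Wm by auto
      next
        fix l assume l: "l \<in> {..<mu}"
        obtain w where "length w = l" "x \<in> Ew xi w" using Ew_cover[OF x, of l xi] by blast
        then show "\<exists>w\<in>W mu \<inter> {w. x \<in> Ew xi w}. l = length w" using Wm l by auto
      qed
    qed
    finally show "(\<Sum>w\<in>W mu. indicator (Ew xi w) x) = real mu" by simp
  next
    fix w assume w: "w \<in> W mu"
    then have lw: "length w < mu" using Wm by simp
    show "(\<integral>\<^sup>+ x. ennreal ((conv (indicator (Ew xi w)) (dilate (rho w) phi) x - indicator (Ew xi w) x)\<^sup>2) \<partial>lebesgue)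
          \<le> ennreal ((2 powr (- (real mu + 10)))\<^sup>2)"
      using xr[OF lw] by (simp add: Q_def GC_def eps_def)
    show "(\<integral>x\<in>Ew xi w. \<bar>cos (xi w \<bullet> x)\<bar> \<partial>lebesgue) \<ge> measure lebesgue (Ew xi w) / 3"
      using xr[OF lw] by (simp add: Q_def GC_def)
    show "ball (xi w) (rho w) \<subseteq> S (tau mu w)"
      using xr[OF lw] by (simp add: Q_def GC_def)
  next
    fix w :: "bool list" and x
    show "x \<in> Ew xi (w @ [False]) \<Longrightarrow> cos (xi w \<bullet> x) \<ge> 0" by (simp add: Ew_snoc)
    show "x \<in> Ew xi (w @ [True]) \<Longrightarrow> cos (xi w \<bullet> x) < 0" by (auto simp: Ew_snoc)
  qed
qed


end
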